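(* Let $f=cM_0+\sum_{i=1}^dc_iM_i\in\mathbb C[U_1,\ldots,U_n]$, where $M_0=U_1^{k_1}\cdots U_n^{k_n}$ with $k_1\ge1$ and $k_1\ge k_i$ for $i=2,\ldots,n$; $c,c_1,\ldots,c_d\in\mathbb C$ with $c\ne0$; and $M_1,\ldots,M_d$ are monomials each divisible by $U_1^{k_1+1}$. Then there exists $m\ge1$ with $\mathcal L(f^m)\ne0$.
   Context: $\mathcal L:\mathbb C[U_1,\ldots,U_n]\to\mathbb C$ is the $\mathbb C$-linear map defined on monomials by $\mathcal L(U_1^{\ell_1}\cdots U_n^{\ell_n})=\ell_1!\cdots\ell_n!$. *)

theory Defs
  imports Complex_Main "HOL-Library.Poly_Mapping"
begin

text \<open>Polynomials in variables U_i (i :: nat) with complex coefficients are represented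
as finitely supported maps from exponent vectors (nat =>0 nat) to coefficients.
The monomial U^a is Poly_Mapping.single a 1.\<close>

type_synonym cpoly = "(nat \<Rightarrow>\<^sub>0 nat) \<Rightarrow>\<^sub>0 complex"

definition Lfun :: "cpoly \<Rightarrow> complex" where
  "Lfun p = (\<Sum>a\<in>Poly_Mapping.keys p. Poly_Mapping.lookup p a * (\<Prod>i\<in>Poly_Mapping.keys a. of_nat (fact (Poly_Mapping.lookup a i))))"

end

theory Submission imports Defs "HOL-Number_Theory.Number_Theory" "HOL-Computational_Algebra.Fundamental_Theorem_Algebra"
begin


definition subr :: "complex set \<Rightarrow> bool" where
  "subr R \<longleftrightarrow> 0 \<in> R \<and> 1 \<in> R \<and> (\<forall>x\<in>R. \<forall>y\<in>R. x + y \<in> R \<and> x * y \<in> R) \<and> (\<forall>x\<in>R. - x \<in> R)"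

definition cin :: "complex set \<Rightarrow> complex poly \<Rightarrow> bool" where
  "cin R P \<longleftrightarrow> (\<forall>n. coeff P n \<in> R)"

lemma subrD:
  assumes "subr R"
  shows "0 \<in> R" "1 \<in> R" "x \<in> R \<Longrightarrow> y \<in> R \<Longrightarrow> x + y \<in> R"
    "x \<in> R \<Longrightarrow> y \<in> R \<Longrightarrow> x * y \<in> R" "x \<in> R \<Longrightarrow> - x \<in> R"
    "x \<in> R \<Longrightarrow> y \<in> R \<Longrightarrow> x - y \<in> R"
  using assms unfolding subr_def by (auto simp del: add_uminus_conv_diff simp add: diff_conv_add_uminus)

lemma subr_sum: "subr R \<Longrightarrow> (\<And>i. i \<in> A \<Longrightarrow> f i \<in> R) \<Longrightarrow> sum f A \<in> R"
  by (induction A rule: infinite_finite_induct) (auto intro: subrD)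

lemma subr_prod: "subr R \<Longrightarrow> (\<And>i. i \<in> A \<Longrightarrow> f i \<in> R) \<Longrightarrow> prod f A \<in> R"
  by (induction A rule: infinite_finite_induct) (auto intro: subrD)

lemma subr_power: "subr R \<Longrightarrow> x \<in> R \<Longrightarrow> x ^ n \<in> R"
  by (induction n) (auto intro: subrD)

lemma subr_of_nat: "subr R \<Longrightarrow> of_nat n \<in> R"
  by (induction n) (auto intro: subrD)

lemma subr_of_int: assumes "subr R" shows "of_int n \<in> R"
proof (cases "n \<ge> 0")
  case True
  then have "of_int n = (of_nat (nat n) :: complex)" by simp
  then show ?thesis using subr_of_nat[OF assms, of "nat n"] by simp
next
  case False
  then have "of_int n = - (of_nat (nat (-n)) :: complex)" by simp
  then show ?thesis using subrD(5)[OF assms subr_of_nat[OF assms, of "nat (-n)"]] by simp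
qed

lemma subr_Ints: "subr \<int>"
  unfolding subr_def by auto

lemma cin_add: "subr R \<Longrightarrow> cin R P \<Longrightarrow> cin R Q \<Longrightarrow> cin R (P + Q)"
  by (auto simp: cin_def intro: subrD)
lemma cin_diff: "subr R \<Longrightarrow> cin R P \<Longrightarrow> cin R Q \<Longrightarrow> cin R (P - Q)"
  by (auto simp: cin_def intro: subrD)
lemma cin_uminus: "subr R \<Longrightarrow> cin R P \<Longrightarrow> cin R (- P)"
  by (auto simp: cin_def intro: subrD)
lemma cin_mult: "subr R \<Longrightarrow> cin R P \<Longrightarrow> cin R Q \<Longrightarrow> cin R (P * Q)"
  unfolding cin_def coeff_mult by (auto intro!: subr_sum subrD)
lemma cin_smult: "subr R \<Longrightarrow> c \<in> R \<Longrightarrow> cin R Q \<Longrightarrow> cin R (smult c Q)"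
  by (auto simp: cin_def intro: subrD)
lemma cin_monom: "subr R \<Longrightarrow> c \<in> R \<Longrightarrow> cin R (monom c n)"
  by (auto simp: cin_def coeff_monom intro: subrD)
lemma cin_const: "subr R \<Longrightarrow> c \<in> R \<Longrightarrow> cin R [:c:]"
  by (auto simp: cin_def coeff_pCons split: nat.splits intro: subrD)
lemma cin_0: "subr R \<Longrightarrow> cin R 0"
  by (auto simp: cin_def intro: subrD)
lemma cin_1: "subr R \<Longrightarrow> cin R 1"
  by (auto simp: cin_def coeff_1 intro: subrD)
lemma cin_power: "subr R \<Longrightarrow> cin R P \<Longrightarrow> cin R (P ^ n)"
  by (induction n) (auto intro: cin_mult cin_1)
lemma cin_prod: "subr R \<Longrightarrow> (\<And>i. i \<in> A \<Longrightarrow> cin R (f i)) \<Longrightarrow> cin R (prod f A)"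
  by (induction A rule: infinite_finite_induct) (auto intro: cin_mult cin_1)
lemma cin_pderiv: "subr R \<Longrightarrow> cin R P \<Longrightarrow> cin R (pderiv P)"
  by (auto simp: cin_def coeff_pderiv intro: subrD subr_of_nat)
lemma cin_lead: "cin R P \<Longrightarrow> lead_coeff P \<in> R"
  by (simp add: cin_def)
lemma cin_poly: "subr R \<Longrightarrow> cin R P \<Longrightarrow> x \<in> R \<Longrightarrow> poly P x \<in> R"
  unfolding poly_altdef cin_def by (auto intro!: subr_sum subrD subr_power)

lemma pseudo_div:
  assumes R: "subr R" and F: "cin R F" "F \<noteq> 0"
  shows "cin R P \<Longrightarrow> \<exists>e Q Rm. cin R Q \<and> cin R Rm \<and> smult (lead_coeff F ^ e) P = Q * F + Rm
            \<and> (Rm = 0 \<or> degree Rm < degree F)"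
proof (induction "degree P" arbitrary: P rule: less_induct)
  case less
  show ?case
  proof (cases "P = 0 \<or> degree P < degree F")
    case True
    then show ?thesis using less.prems
      by (intro exI[of _ 0] exI[of _ 0] exI[of _ P]) (auto intro: cin_0 R)
  next
    case False
    let ?b = "lead_coeff F"
    let ?M = "monom (lead_coeff P) (degree P - degree F)"
    define P' where "P' = smult ?b P - ?M * F"
    have cM: "cin R ?M" using R less.prems by (intro cin_monom) (auto simp: cin_def)
    have cP': "cin R P'" unfolding P'_def using R less.prems F cM
      by (intro cin_diff cin_smult cin_mult) (auto simp: cin_def)
    have degle: "degree P' \<le> degree P"
      unfolding P'_def
      apply (rule degree_diff_le)
       apply (rule order.trans[OF degree_smult_le], simp)
      apply (rule order.trans[OF degree_mult_le])
      apply (rule order.trans[OF add_le_mono[OF degree_monom_le order.refl]])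
      using False by simp
    have cMF: "coeff (?M * F) (degree P) = lead_coeff P * lead_coeff F"
      using False by (simp add: coeff_monom_mult)
    have coeff0: "coeff P' (degree P) = 0"
      unfolding P'_def using cMF by (simp add: mult.commute)
    have eqP: "smult ?b P = P' + ?M * F" unfolding P'_def by simp
    show ?thesis
    proof (cases "P' = 0")
      case True
      show ?thesis
        by (intro exI[of _ 1] exI[of _ ?M] exI[of _ 0])
          (use eqP True cM R in \<open>auto intro: cin_0\<close>)
    next
      case P'nz: False
      have "degree P' \<noteq> degree P" using P'nz coeff0 by (metis leading_coeff_0_iff)
      with degle have "degree P' < degree P" by simp
      from less.hyps[OF this cP'] obtain e Q Rm where
        QR: "cin R Q" "cin R Rm" "smult (?b ^ e) P' = Q * F + Rm" "Rm = 0 \<or> degree Rm < degree F"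
        by blast
      have "smult (?b ^ Suc e) P = smult (?b ^ e) (smult ?b P)" by (simp add: mult.commute)
      also have "\<dots> = smult (?b ^ e) P' + smult (?b ^ e) (?M * F)" by (simp add: eqP smult_add_right)
      also have "\<dots> = (Q + smult (?b ^ e) ?M) * F + Rm" using QR(3) by (simp add: algebra_simps)
      finally show ?thesis using QR R cM F
        by (intro exI[of _ "Suc e"] exI[of _ "Q + smult (?b ^ e) ?M"] exI[of _ Rm])
           (auto intro!: cin_add cin_smult subr_power cin_lead)
    qed
  qed
qed



inductive_set Rg :: "complex set \<Rightarrow> complex set" for S where
  gen: "x \<in> S \<Longrightarrow> x \<in> Rg S"
| one: "1 \<in> Rg S"
| add: "x \<in> Rg S \<Longrightarrow> y \<in> Rg S \<Longrightarrow> x + y \<in> Rg S"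
| neg: "x \<in> Rg S \<Longrightarrow> - x \<in> Rg S"
| mul: "x \<in> Rg S \<Longrightarrow> y \<in> Rg S \<Longrightarrow> x * y \<in> Rg S"

lemma subr_Rg: "subr (Rg S)"
proof -
  have "0 \<in> Rg S" using Rg.add[OF Rg.one Rg.neg[OF Rg.one]] by simp
  then show ?thesis unfolding subr_def by (auto intro: Rg.intros)
qed

lemma Rg_mono: assumes "S \<subseteq> T" "x \<in> Rg S" shows "x \<in> Rg T"
  using assms(2) by induction (use assms(1) in \<open>auto intro: Rg.intros\<close>)

lemma Rg_insert_poly:
  assumes "x \<in> Rg (insert t S)"
  shows "\<exists>P. cin (Rg S) P \<and> x = poly P t"
  using assms
proof (induction x rule: Rg.induct)
  case (gen x)
  then show ?case
  proof
    assume "x = t" then show ?thesis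
      by (intro exI[of _ "monom 1 1"]) (simp add: cin_monom subr_Rg subrD(2)[OF subr_Rg] poly_monom)
  next
    assume "x \<in> S" then show ?thesis
      by (intro exI[of _ "[:x:]"]) (simp add: cin_const subr_Rg Rg.gen)
  qed
next
  case one then show ?case by (intro exI[of _ 1]) (simp add: cin_1 subr_Rg)
next
  case (add x y) then show ?case
    by (metis cin_add poly_add subr_Rg)
next
  case (neg x) then show ?case
    by (metis cin_uminus poly_minus subr_Rg)
next
  case (mul x y) then show ?case
    by (metis cin_mult poly_mult subr_Rg)
qed

lemma poly_Rg_insert:
  "cin (Rg S) P \<Longrightarrow> poly P t \<in> Rg (insert t S)"
proof (induction P)
  case (pCons a p)
  have a: "a \<in> Rg (insert t S)" using pCons.prems Rg_mono[of S "insert t S"]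
    unfolding cin_def by (metis coeff_pCons_0 subset_insertI)
  have "cin (Rg S) p" using pCons.prems unfolding cin_def by (metis coeff_pCons_Suc)
  then have "poly p t \<in> Rg (insert t S)" by (rule pCons.IH)
  have "t \<in> Rg (insert t S)" by (simp add: Rg.gen)
  then show ?case using a \<open>poly p t \<in> Rg (insert t S)\<close> by (simp add: Rg.add Rg.mul)
qed (simp add: subrD(1)[OF subr_Rg])

lemma Rg_inv:
  assumes "a \<in> Rg T" "a \<noteq> 0" "x \<in> Rg (insert (1/a) T)"
  shows "\<exists>b N. b \<in> Rg T \<and> x = b / a ^ N"
  using assms(3)
proof (induction x rule: Rg.induct)
  case (gen x)
  then show ?case
  proof
    assume "x = 1/a" then show ?thesis by (intro exI[of _ 1] exI[of _ 1]) (auto intro: Rg.intros)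
  next
    assume "x \<in> T" then show ?thesis by (intro exI[of _ x] exI[of _ 0]) (auto intro: Rg.intros)
  qed
next
  case one then show ?case by (intro exI[of _ 1] exI[of _ 0]) (auto intro: Rg.intros)
next
  case (add x y)
  then obtain b1 N1 b2 N2 where b: "b1 \<in> Rg T" "x = b1 / a ^ N1" "b2 \<in> Rg T" "y = b2 / a ^ N2" by blast
  have "x + y = (b1 * a ^ N2 + b2 * a ^ N1) / a ^ (N1 + N2)"
    unfolding b(2) b(4) using assms(2) by (simp add: field_simps power_add)
  moreover have "b1 * a ^ N2 + b2 * a ^ N1 \<in> Rg T"
  proof -
    have "a ^ N1 \<in> Rg T" "a ^ N2 \<in> Rg T" using assms(1) subr_power[OF subr_Rg] by blast+
    then show ?thesis using b by (blast intro: Rg.add Rg.mul)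
  qed
  ultimately show ?case by blast
next
  case (neg x)
  then obtain b N where "b \<in> Rg T" "x = b / a ^ N" by blast
  then show ?case by (intro exI[of _ "-b"] exI[of _ N]) (auto intro: Rg.intros)
next
  case (mul x y)
  then obtain b1 N1 b2 N2 where b: "b1 \<in> Rg T" "x = b1 / a ^ N1" "b2 \<in> Rg T" "y = b2 / a ^ N2" by blast
  have "x * y = (b1 * b2) / a ^ (N1 + N2)"
    unfolding b(2) b(4) using assms(2) by (simp add: field_simps power_add)
  then show ?case using b by (intro exI[of _ "b1*b2"] exI[of _ "N1+N2"]) (auto intro: Rg.intros)
qed

lemma inv_Rg:
  assumes "b \<in> Rg T"
  shows "b / a ^ N \<in> Rg (insert (1/a) T)"
proof -
  have "b \<in> Rg (insert (1/a) T)" using assms Rg_mono by blast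
  moreover have "(1/a) ^ N \<in> Rg (insert (1/a) T)" by (rule subr_power[OF subr_Rg]) (simp add: Rg.gen)
  ultimately have "b * (1/a)^N \<in> Rg (insert (1/a) T)" by (auto intro: Rg.intros)
  then show ?thesis by (simp add: field_simps)
qed



lemma Rg_empty: assumes "x \<in> Rg {}" shows "\<exists>z::int. x = of_int z"
  using assms
proof induction
  case (add x y) then show ?case by (metis of_int_add)
next
  case (neg x) then show ?case by (metis of_int_minus)
next
  case (mul x y) then show ?case by (metis of_int_mult)
qed (auto intro: exI[of _ 1])

lemma inv_lemma:
  assumes R: "subr R" and F: "cin R F" "F \<noteq> 0" "poly F t = 0"
    and minF: "\<And>P. cin R P \<Longrightarrow> P \<noteq> 0 \<Longrightarrow> poly P t = 0 \<Longrightarrow> degree F \<le> degree P"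
  shows "cin R A \<Longrightarrow> poly A t \<noteq> 0 \<Longrightarrow> \<exists>V \<gamma>. cin R V \<and> \<gamma> \<in> R \<and> \<gamma> \<noteq> 0 \<and> poly A t * poly V t = \<gamma>"
proof (induction "degree A" arbitrary: A rule: less_induct)
  case less
  show ?case
  proof (cases "degree A = 0")
    case True
    then have "A = [:coeff A 0:]" by (metis degree_0_id)
    then have "poly A t = coeff A 0" by (metis poly_const_conv)
    moreover have "cin R 1" using R by (rule cin_1)
    moreover have "coeff A 0 \<in> R" using less.prems by (simp add: cin_def)
    ultimately show ?thesis using less.prems(2) by (metis mult.right_neutral poly_1)
  next
    case Apos: False
    show ?thesis
    proof (cases "degree F \<le> degree A")
      case True
      obtain e Q Rm where QR: "cin R Q" "cin R Rm" "smult (lead_coeff F ^ e) A = Q * F + Rm"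
          "Rm = 0 \<or> degree Rm < degree F"
        using pseudo_div[OF R F(1,2) less.prems(1)] by blast
      have ev: "lead_coeff F ^ e * poly A t = poly Rm t"
        using arg_cong[OF QR(3), of "\<lambda>P. poly P t"] F(3) by simp
      have "lead_coeff F \<noteq> 0" using F(2) by simp
      then have Rmt: "poly Rm t \<noteq> 0" using ev less.prems(2) by (metis mult_eq_0_iff power_not_zero)
      then have "Rm \<noteq> 0" by auto
      then have "degree Rm < degree A" using QR(4) True by simp
      from less.hyps[OF this QR(2) Rmt] obtain V \<gamma> where
        V: "cin R V" "\<gamma> \<in> R" "\<gamma> \<noteq> 0" "poly Rm t * poly V t = \<gamma>" by blast
      show ?thesis
        by (intro exI[of _ "smult (lead_coeff F ^ e) V"] exI[of _ \<gamma>])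
           (use V ev R F(1) in \<open>auto intro!: cin_smult subr_power cin_lead simp: algebra_simps\<close>)
    next
      case False
      have Anz: "A \<noteq> 0" using less.prems(2) by auto
      obtain e Q Rm where QR: "cin R Q" "cin R Rm" "smult (lead_coeff A ^ e) F = Q * A + Rm"
          "Rm = 0 \<or> degree Rm < degree A"
        using pseudo_div[OF R less.prems(1) Anz F(1)] by blast
      have ev: "0 = poly Q t * poly A t + poly Rm t"
        using arg_cong[OF QR(3), of "\<lambda>P. poly P t"] F(3) by simp
      have Rmt: "poly Rm t \<noteq> 0"
      proof
        assume Rm0: "poly Rm t = 0"
        have "Rm = 0"
        proof (rule ccontr)
          assume "Rm \<noteq> 0"
          then have "degree F \<le> degree Rm" using minF[OF QR(2) _ Rm0] by simp
          moreover have "degree Rm < degree A" using QR(4) \<open>Rm \<noteq> 0\<close> by simp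
          ultimately show False using False by simp
        qed
        then have eqQ: "smult (lead_coeff A ^ e) F = Q * A" using QR(3) by simp
        have "poly Q t = 0" using ev Rm0 less.prems(2) by simp
        moreover have Qnz: "Q \<noteq> 0" using eqQ F(2) Anz by auto
        ultimately have "degree F \<le> degree Q" using minF[OF QR(1)] by simp
        moreover have "degree F = degree Q + degree A"
          using eqQ Qnz Anz by (metis degree_mult_eq degree_smult_eq leading_coeff_0_iff power_not_zero)
        ultimately show False using Apos by simp
      qed
      then have "Rm \<noteq> 0" by auto
      then have "degree Rm < degree A" using QR(4) by simp
      from less.hyps[OF this QR(2) Rmt] obtain V \<gamma> where
        V: "cin R V" "\<gamma> \<in> R" "\<gamma> \<noteq> 0" "poly Rm t * poly V t = \<gamma>" by blast
      have "poly Rm t = - (poly Q t * poly A t)" using ev by (simp add: eq_neg_iff_add_eq_0 add.commute)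
      then have "poly A t * poly (- (Q * V)) t = \<gamma>" using V(4) by (simp add: algebra_simps)
      then show ?thesis using V QR R
        by (intro exI[of _ "- (Q * V)"] exI[of _ \<gamma>]) (auto intro!: cin_uminus cin_mult)
    qed
  qed
qed

lemma inv_eq: assumes "(1::complex) / of_nat p = b / a ^ N" "p \<noteq> 0" "a \<noteq> 0"
  shows "a ^ N = of_nat p * b"
  using assms by (simp add: field_simps)



lemma inv_primes_finite:
  assumes "finite S"
  shows "\<forall>a \<in> Rg S. a \<noteq> 0 \<longrightarrow> (\<exists>D::nat. D > 0 \<and>
           (\<forall>p. prime p \<longrightarrow> 1 / of_nat p \<in> Rg (insert (1/a) S) \<longrightarrow> p dvd D))"
  using assms
proof (induction S rule: finite_induct)
  case empty
  show ?case
  proof (intro ballI impI)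
    fix a assume a: "a \<in> Rg {}" "a \<noteq> 0"
    obtain z where z: "a = of_int z" using Rg_empty[OF a(1)] by blast
    have znz: "z \<noteq> 0" using a(2) z by simp
    show "\<exists>D::nat. D > 0 \<and> (\<forall>p. prime p \<longrightarrow> 1 / of_nat p \<in> Rg (insert (1/a) {}) \<longrightarrow> p dvd D)"
    proof (intro exI[of _ "nat \<bar>z\<bar>"] conjI allI impI)
      show "nat \<bar>z\<bar> > 0" using znz by simp
    next
      fix p :: nat assume p: "prime p" "1 / of_nat p \<in> Rg (insert (1/a) {})"
      obtain b N where bN: "b \<in> Rg {}" "1 / of_nat p = b / a ^ N" using Rg_inv[OF a p(2)] by blast
      obtain w where w: "b = of_int w" using Rg_empty[OF bN(1)] by blast
      have "a ^ N = of_nat p * b" using inv_eq[OF bN(2)] p(1) a(2) by (simp add: prime_gt_0_nat)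
      then have "(of_int (z ^ N) :: complex) = of_int (int p * w)" using z w by simp
      then have "z ^ N = int p * w" by (simp only: of_int_eq_iff)
      then have "int p dvd z ^ N" by simp
      moreover have "prime (int p)" using p(1) by simp
      ultimately have "int p dvd z" using prime_dvd_power by blast
      then show "p dvd nat \<bar>z\<bar>" by (metis dvd_abs_iff int_dvd_int_iff int_nat_eq abs_ge_zero nat_0_le)
    qed
  qed
next
  case (insert t S)
  have RS: "subr (Rg S)" by (rule subr_Rg)
  show ?case
  proof (intro ballI impI)
    fix a assume a: "a \<in> Rg (insert t S)" "a \<noteq> 0"
    obtain A where A: "cin (Rg S) A" "a = poly A t" using Rg_insert_poly[OF a(1)] by blast
    show "\<exists>D::nat. D > 0 \<and> (\<forall>p. prime p \<longrightarrow> 1 / of_nat p \<in> Rg (insert (1/a) (insert t S)) \<longrightarrow> p dvd D)"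
    proof (cases "\<forall>P. cin (Rg S) P \<longrightarrow> poly P t = 0 \<longrightarrow> P = 0")
      case True
      have Anz: "A \<noteq> 0" using A a(2) by auto
      let ?\<alpha> = "lead_coeff A"
      have al: "?\<alpha> \<in> Rg S" "?\<alpha> \<noteq> 0" using A(1) Anz by (auto simp: cin_def)
      obtain D where D: "D > 0" "\<And>p. prime p \<Longrightarrow> 1 / of_nat p \<in> Rg (insert (1/?\<alpha>) S) \<Longrightarrow> p dvd D"
        using insert.IH al by blast
      show ?thesis
      proof (intro exI[of _ D] conjI allI impI)
        fix p :: nat assume p: "prime p" "1 / of_nat p \<in> Rg (insert (1/a) (insert t S))"
        obtain b N where bN: "b \<in> Rg (insert t S)" "1 / of_nat p = b / a ^ N" using Rg_inv[OF a p(2)] by blast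
        obtain B where B: "cin (Rg S) B" "b = poly B t" using Rg_insert_poly[OF bN(1)] by blast
        have pnz: "p \<noteq> 0" using p(1) by (simp add: prime_gt_0_nat)
        have "a ^ N = of_nat p * b" using inv_eq[OF bN(2) pnz a(2)] .
        then have "poly (A ^ N - smult (of_nat p) B) t = 0" using A B by simp
        moreover have "cin (Rg S) (A ^ N - smult (of_nat p) B)"
          using RS A B by (intro cin_diff cin_power cin_smult subr_of_nat) auto
        ultimately have "A ^ N = smult (of_nat p) B" using True by auto
        then have "lead_coeff (A ^ N) = lead_coeff (smult (of_nat p) B)" by simp
        then have eq: "?\<alpha> ^ N = of_nat p * lead_coeff B" by (simp add: lead_coeff_power)
        have lb: "lead_coeff B \<noteq> 0" using eq al(2) by auto
        have "1 / of_nat p = lead_coeff B / ?\<alpha> ^ N" unfolding eq using lb pnz by simp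
        moreover have "lead_coeff B / ?\<alpha> ^ N \<in> Rg (insert (1/?\<alpha>) S)"
          using B(1) by (intro inv_Rg) (simp add: cin_def)
        ultimately show "p dvd D" using D(2)[OF p(1)] by simp
      qed (use D in auto)
    next
      case False
      then obtain F0 where F0: "cin (Rg S) F0" "F0 \<noteq> 0" "poly F0 t = 0" by blast
      define d where "d = (LEAST n. \<exists>F. cin (Rg S) F \<and> F \<noteq> 0 \<and> poly F t = 0 \<and> degree F = n)"
      have "\<exists>F. cin (Rg S) F \<and> F \<noteq> 0 \<and> poly F t = 0 \<and> degree F = d"
        unfolding d_def by (rule LeastI[of _ "degree F0"]) (use F0 in blast)
      then obtain F where F: "cin (Rg S) F" "F \<noteq> 0" "poly F t = 0" "degree F = d" by blast
      have minF: "degree F \<le> degree P" if "cin (Rg S) P" "P \<noteq> 0" "poly P t = 0" for P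
        unfolding F(4) d_def by (rule Least_le) (use that in blast)
      have degF: "degree F > 0"
      proof (rule ccontr)
        assume "\<not> degree F > 0"
        then have "F = [:coeff F 0:]" by (metis degree_0_id not_gr0)
        then have "poly F t = coeff F 0" by (metis poly_const_conv)
        moreover have "coeff F 0 \<noteq> 0" using F(2) \<open>F = [:coeff F 0:]\<close> by (metis pCons_0_0)
        ultimately show False using F(3) by simp
      qed
      let ?\<beta> = "lead_coeff F"
      have be: "?\<beta> \<in> Rg S" "?\<beta> \<noteq> 0" using F(1,2) by (auto simp: cin_def)
      have "poly A t \<noteq> 0" using A a(2) by simp
      from inv_lemma[OF RS F(1-3) minF A(1) this] obtain V \<gamma> where
        V: "cin (Rg S) V" "\<gamma> \<in> Rg S" "\<gamma> \<noteq> 0" "poly A t * poly V t = \<gamma>" by blast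
      let ?\<alpha> = "?\<beta> * \<gamma>"
      have al: "?\<alpha> \<in> Rg S" "?\<alpha> \<noteq> 0" using be V(2,3) by (auto intro: Rg.mul)
      obtain D where D: "D > 0" "\<And>p. prime p \<Longrightarrow> 1 / of_nat p \<in> Rg (insert (1/?\<alpha>) S) \<Longrightarrow> p dvd D"
        using insert.IH al by blast
      show ?thesis
      proof (intro exI[of _ D] conjI allI impI)
        fix p :: nat assume p: "prime p" "1 / of_nat p \<in> Rg (insert (1/a) (insert t S))"
        obtain b N where bN: "b \<in> Rg (insert t S)" "1 / of_nat p = b / a ^ N" using Rg_inv[OF a p(2)] by blast
        obtain B where B: "cin (Rg S) B" "b = poly B t" using Rg_insert_poly[OF bN(1)] by blast
        have pnz: "p \<noteq> 0" using p(1) by (simp add: prime_gt_0_nat)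
        have aN: "a ^ N = of_nat p * b" using inv_eq[OF bN(2) pnz a(2)] .
        have cBV: "cin (Rg S) (B * V ^ N)" using RS B V by (intro cin_mult cin_power) auto
        obtain e Q Rm where QR: "cin (Rg S) Q" "cin (Rg S) Rm" "smult (?\<beta> ^ e) (B * V ^ N) = Q * F + Rm"
            "Rm = 0 \<or> degree Rm < degree F"
          using pseudo_div[OF RS F(1,2) cBV] by blast
        have ev: "?\<beta> ^ e * (b * poly V t ^ N) = poly Rm t"
          using arg_cong[OF QR(3), of "\<lambda>P. poly P t"] F(3) B(2) by simp
        have gN: "\<gamma> ^ N = of_nat p * b * poly V t ^ N"
          using V(4) A(2) aN by (metis power_mult_distrib)
        define G where "G = smult (of_nat p) Rm - [:?\<beta> ^ e * \<gamma> ^ N:]"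
        have "poly G t = 0" unfolding G_def using ev gN by (simp add: algebra_simps)
        moreover have "cin (Rg S) G" unfolding G_def using RS QR(2) be V(2)
          by (intro cin_diff cin_smult cin_const subr_of_nat) (auto intro: Rg.mul subr_power)
        moreover have "degree G < degree F"
        proof -
          have "degree G \<le> max (degree (smult (of_nat p) Rm)) (degree [:?\<beta> ^ e * \<gamma> ^ N:])"
            unfolding G_def by (rule degree_diff_le_max)
          also have "\<dots> \<le> max (degree Rm) 0" by (simp add: degree_smult_le)
          finally show ?thesis using QR(4) degF by auto
        qed
        ultimately have "G = 0" using minF[of G] by (meson not_le)
        then have "coeff G 0 = 0" by simp
        then have c0: "of_nat p * coeff Rm 0 = ?\<beta> ^ e * \<gamma> ^ N" unfolding G_def by simp
        have r0: "coeff Rm 0 \<in> Rg S" using QR(2) by (simp add: cin_def)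
        have "1 / of_nat p = (coeff Rm 0 * ?\<beta> ^ N * \<gamma> ^ e) / ?\<alpha> ^ (e + N)"
          using c0 pnz be(2) V(3)
          by (simp add: field_simps power_add power_mult_distrib)
        moreover have "(coeff Rm 0 * ?\<beta> ^ N * \<gamma> ^ e) / ?\<alpha> ^ (e + N) \<in> Rg (insert (1/?\<alpha>) S)"
          using r0 be V(2) by (intro inv_Rg) (auto intro!: Rg.mul subr_power[OF RS])
        ultimately show "p dvd D" using D(2)[OF p(1)] by simp
      qed (use D in auto)
    qed
  qed
qed



definition prim :: "nat \<Rightarrow> complex set" where
  "prim k = {z. z ^ k = 1 \<and> (\<forall>j. 0 < j \<longrightarrow> j < k \<longrightarrow> z ^ j \<noteq> 1)}"

definition cyc :: "nat \<Rightarrow> complex poly" where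
  "cyc k = (\<Prod>z\<in>prim k. [:-z, 1:])"

lemma finite_prim: "k > 0 \<Longrightarrow> finite (prim k)"
  by (rule finite_subset[of _ "{z. z ^ k = 1}"]) (auto simp: prim_def intro: finite_roots_unity)

lemma prim_disj: "d1 > 0 \<Longrightarrow> d2 > 0 \<Longrightarrow> d1 \<noteq> d2 \<Longrightarrow> prim d1 \<inter> prim d2 = {}"
  unfolding prim_def by (auto dest: nat_neq_iff[THEN iffD1])

lemma roots_union:
  assumes k: "k > 0"
  shows "{z::complex. z ^ k = 1} = (\<Union>d\<in>{d. d dvd k}. prim d)"
proof
  show "{z. z ^ k = 1} \<subseteq> (\<Union>d\<in>{d. d dvd k}. prim d)"
  proof
    fix z :: complex assume z: "z \<in> {z. z ^ k = 1}"
    define d where "d = (LEAST j. 0 < j \<and> z ^ j = 1)"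
    have d: "0 < d \<and> z ^ d = 1" unfolding d_def by (rule LeastI[of _ k]) (use z k in auto)
    have dmin: "\<not> (0 < j \<and> z ^ j = 1)" if "j < d" for j
      using that unfolding d_def by (rule not_less_Least)
    have "z ^ (k mod d) = 1"
    proof -
      have "z ^ k = z ^ (d * (k div d) + k mod d)" by simp
      also have "\<dots> = (z ^ d) ^ (k div d) * z ^ (k mod d)" by (simp only: power_add power_mult)
      finally have "z ^ k = (z ^ d) ^ (k div d) * z ^ (k mod d)" .
      then show ?thesis using z d by simp
    qed
    then have "k mod d = 0" using dmin[of "k mod d"] d by (meson mod_less_divisor neq0_conv)
    then have "d dvd k" by auto
    moreover have "z \<in> prim d" unfolding prim_def using d dmin by auto
    ultimately show "z \<in> (\<Union>d\<in>{d. d dvd k}. prim d)" by blast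
  qed
next
  show "(\<Union>d\<in>{d. d dvd k}. prim d) \<subseteq> {z. z ^ k = 1}"
  proof safe
    fix d z assume "d dvd k" "z \<in> prim d"
    then obtain m where "k = d * m" by auto
    then show "z ^ k = 1" using \<open>z \<in> prim d\<close> by (simp add: prim_def power_mult)
  qed
qed

lemma Xk_poly:
  assumes k: "k > 0"
  shows "monom 1 k - 1 = (\<Prod>d\<in>{d. d dvd k}. cyc d)"
proof -
  let ?p = "monom (1::complex) k - 1"
  have pz: "poly ?p z = z ^ k - 1" for z by (simp add: poly_monom)
  have pd: "pderiv ?p = monom (of_nat k) (k - 1)" by (simp add: pderiv_diff pderiv_monom)
  have rsq: "rsquarefree ?p"
    unfolding rsquarefree_roots
  proof (intro allI notI)
    fix a assume a: "poly ?p a = 0 \<and> poly (pderiv ?p) a = 0"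
    then have "of_nat k * a ^ (k - 1) = 0" using pd by (simp add: poly_monom)
    then have "a ^ (k - 1) = 0" using k by simp
    then have "a = 0 \<and> k - 1 > 0" by (metis power_0 power_eq_0_iff zero_neq_one gr0I)
    then show False using a k by (simp add: power_0_left poly_monom)
  qed
  have lc: "lead_coeff ?p = 1"
  proof -
    have e: "?p = -1 + monom 1 k" by simp
    have "degree (-1 :: complex poly) < degree (monom (1::complex) k)"
      using k by (simp add: degree_monom_eq)
    then have "lead_coeff (-1 + monom (1::complex) k) = lead_coeff (monom (1::complex) k)"
      by (rule lead_coeff_add_le)
    then show ?thesis by (simp only: e lead_coeff_monom)
  qed
  have "?p = smult (lead_coeff ?p) (\<Prod>z|poly ?p z = 0. [:-z, 1:])"
    using complex_poly_decompose_rsquarefree[OF rsq] by simp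
  also have "\<dots> = (\<Prod>z\<in>{z. z ^ k = 1}. [:-z, 1:])"
  proof -
    have "{z. poly ?p z = 0} = {z. z ^ k = 1}" unfolding pz by simp
    then show ?thesis by (simp only: lc smult_1_left)
  qed
  also have "\<dots> = (\<Prod>z\<in>(\<Union>d\<in>{d. d dvd k}. prim d). [:-z, 1:])" by (simp add: roots_union[OF k])
  also have "\<dots> = (\<Prod>d\<in>{d. d dvd k}. cyc d)"
    unfolding cyc_def
  proof (rule prod.UNION_disjoint)
    show "finite {d. d dvd k}" using k by simp
    show "\<forall>d\<in>{d. d dvd k}. finite (prim d)" using k by (auto intro!: finite_prim intro: Nat.gr0I)
    show "\<forall>i\<in>{d. d dvd k}. \<forall>j\<in>{d. d dvd k}. i \<noteq> j \<longrightarrow> prim i \<inter> prim j = {}"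
    proof (intro ballI impI)
      fix i j assume ij: "i \<in> {d. d dvd k}" "j \<in> {d. d dvd k}" "i \<noteq> j"
      have "i > 0" "j > 0" using ij k by (auto intro: Nat.gr0I)
      then show "prim i \<inter> prim j = {}" using prim_disj ij(3) by blast
    qed
  qed
  finally show ?thesis .
qed

lemma lead_cyc: "lead_coeff (cyc k) = 1"
  unfolding cyc_def by (simp add: lead_coeff_prod)

lemma divint:
  assumes "cin \<int> P" "cin \<int> B" "lead_coeff B = 1" "P = Q * B"
  shows "cin \<int> Q"
proof -
  have Bnz: "B \<noteq> 0" using assms(3) by auto
  obtain e Q' Rm where QR: "cin \<int> Q'" "cin \<int> Rm" "smult (lead_coeff B ^ e) P = Q' * B + Rm"
      "Rm = 0 \<or> degree Rm < degree B"
    using pseudo_div[OF subr_Ints assms(2) Bnz assms(1)] by blast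
  have eq: "(Q - Q') * B = Rm" using QR(3) assms(3,4) by (simp add: algebra_simps)
  have "Q = Q'"
  proof (rule ccontr)
    assume "Q \<noteq> Q'"
    then have "Q - Q' \<noteq> 0" by simp
    then have "degree ((Q - Q') * B) = degree (Q - Q') + degree B" using Bnz by (rule degree_mult_eq)
    moreover have "(Q - Q') * B \<noteq> 0" using \<open>Q - Q' \<noteq> 0\<close> Bnz by simp
    ultimately show False using eq QR(4) by auto
  qed
  then show ?thesis using QR(1) by simp
qed

lemma cin_Xk: "cin \<int> (monom 1 k - 1)"
  by (intro cin_diff cin_monom cin_1 subr_Ints) auto

lemma cyc_int: "k > 0 \<Longrightarrow> cin \<int> (cyc k)"
proof (induction k rule: less_induct)
  case (less k)
  let ?B = "\<Prod>d\<in>{d. d dvd k \<and> d \<noteq> k}. cyc d"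
  have set: "{d. d dvd k} = insert k {d. d dvd k \<and> d \<noteq> k}" by auto
  have "monom 1 k - 1 = cyc k * ?B"
    using Xk_poly[OF less.prems] unfolding set using less.prems by (subst (asm) prod.insert) auto
  moreover have "cin \<int> ?B"
  proof (rule cin_prod[OF subr_Ints])
    fix d assume d: "d \<in> {d. d dvd k \<and> d \<noteq> k}"
    then have "d < k" "d > 0" using less.prems by (auto intro: Nat.gr0I dest: dvd_imp_le)
    then show "cin \<int> (cyc d)" by (rule less.IH)
  qed
  moreover have "lead_coeff ?B = 1" by (simp add: lead_coeff_prod lead_cyc)
  ultimately show ?case using divint[OF cin_Xk] by blast
qed

lemma prim_nonempty: assumes "k > 0" shows "prim k \<noteq> {}"
proof -
  let ?f = "\<lambda>j. cis (2 * pi * real j / real k)"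
  have inj: "inj_on ?f {..<k}" using bij_betw_roots_unity[OF assms] by (simp add: bij_betw_def)
  have pw: "?f 1 ^ j = ?f j" for j by (simp add: DeMoivre mult_ac)
  have "?f 1 \<in> prim k"
    unfolding prim_def
  proof (intro CollectI conjI allI impI)
    show "?f 1 ^ k = 1" using pw[of k] assms by simp
  next
    fix j assume j: "0 < j" "j < k"
    have "?f j \<noteq> ?f 0" using inj j assms unfolding inj_on_def by (metis lessThan_iff neq0_conv)
    then show "?f 1 ^ j \<noteq> 1" using pw by simp
  qed
  then show ?thesis by blast
qed

lemma cyc_norm:
  assumes k: "k > 0" and x: "x \<ge> 3"
  shows "norm (poly (cyc k) (of_real x)) \<ge> 2"
proof -
  have "norm (poly (cyc k) (of_real x)) = (\<Prod>z\<in>prim k. norm (of_real x - z))"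
    unfolding cyc_def poly_prod by (simp add: prod_norm)
  also have "\<dots> \<ge> (\<Prod>z\<in>prim k. 2)"
  proof (rule prod_mono)
    fix z assume z: "z \<in> prim k"
    then have "z ^ k = 1" by (simp add: prim_def)
    then have "norm (z ^ k) = 1" by simp
    then have "norm z ^ k = 1 ^ k" by (simp add: norm_power)
    then have "norm z = 1" using k power_eq_iff_eq_base[of k "norm z" 1] by simp
    moreover have "norm (of_real x :: complex) - norm z \<le> norm (of_real x - z)" by (rule norm_triangle_ineq2)
    ultimately show "0 \<le> (2::real) \<and> 2 \<le> norm (of_real x - z)" using x by simp
  qed
  finally have "norm (poly (cyc k) (of_real x)) \<ge> 2 ^ card (prim k)" by simp
  moreover have "card (prim k) \<ge> 1" using finite_prim[OF k] prim_nonempty[OF k]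
    by (simp add: Suc_le_eq card_gt_0_iff)
  moreover have "(2::real) ^ card (prim k) \<ge> 2 ^ 1"
    by (rule power_increasing) (use calculation in auto)
  ultimately show ?thesis by simp
qed



lemma primes_1_mod:
  assumes k: "k > 0" and D: "D > (0::nat)"
  shows "\<exists>q. prime q \<and> k dvd q - 1 \<and> \<not> q dvd D"
proof -
  define x where "x = 3 * k * D"
  have x3: "x \<ge> 3" using k D unfolding x_def by (simp add: Suc_le_eq)
  have kx: "k dvd x" "D dvd x" unfolding x_def by auto
  define cx where "cx = (of_nat x :: complex)"
  have cxZ: "cx \<in> \<int>" unfolding cx_def by simp
  have intv: "poly P cx \<in> \<int>" if "cin \<int> P" for P
    using cin_poly[OF subr_Ints that cxZ] .
  define u where "u d = (SOME z::int. poly (cyc d) cx = of_int z)" for d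
  have u: "poly (cyc d) cx = of_int (u d)" if "d > 0" for d
  proof -
    have "poly (cyc d) cx \<in> \<int>" using intv[OF cyc_int[OF that]] .
    then obtain z where "poly (cyc d) cx = of_int z" by (elim Ints_cases)
    then show ?thesis unfolding u_def by (rule someI)
  qed
  have prodx: "int x ^ m - 1 = (\<Prod>d\<in>{d. d dvd m}. u d)" if m: "m > 0" for m
  proof -
    have "poly (monom 1 m - 1) cx = poly (\<Prod>d\<in>{d. d dvd m}. cyc d) cx"
      by (simp only: Xk_poly[OF m])
    also have "\<dots> = (\<Prod>d\<in>{d. d dvd m}. of_int (u d))"
      unfolding poly_prod using m by (intro prod.cong refl u) (auto intro: Nat.gr0I)
    finally have "(of_int (int x ^ m - 1) :: complex) = of_int (\<Prod>d\<in>{d. d dvd m}. u d)"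
      by (simp add: poly_monom cx_def)
    then show ?thesis by (simp only: of_int_eq_iff)
  qed
  have uk2: "\<bar>u k\<bar> \<ge> 2"
  proof -
    have "real x \<ge> 3" using x3 by simp
    from cyc_norm[OF k this] have "norm (poly (cyc k) (of_real (real x))) \<ge> 2" .
    moreover have "poly (cyc k) (of_real (real x)) = of_int (u k)" using u[OF k] unfolding cx_def by simp
    ultimately have "2 \<le> norm (of_int (u k) :: complex)" by simp
    then have "(2::real) \<le> of_int \<bar>u k\<bar>" by (simp only: norm_of_int)
    then show ?thesis by linarith
  qed
  have uk0: "u k \<noteq> 0" using uk2 by auto
  have ukn: "\<not> is_unit (u k)"
  proof
    assume "is_unit (u k)"
    then have "\<bar>u k\<bar> \<le> \<bar>1\<bar>" by (intro dvd_imp_le_int) auto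
    then show False using uk2 by simp
  qed
  obtain b where b: "b dvd u k" "prime b"
    using prime_divisor_exists[OF uk0 ukn] by blast
  define q where "q = nat b"
  have bq: "b = int q" unfolding q_def using b(2) by (simp add: prime_gt_0_int order.strict_implies_order)
  have q: "prime q" using b(2) bq by simp
  have qint: "prime (int q)" using q by simp
  have qk: "int q dvd u k" using b bq by simp
  have qxk: "int q dvd int x ^ k - 1"
    using dvd_trans[OF qk dvd_prodI[of "{d. d dvd k}" k u]] prodx[OF k] k by simp
  have qnx: "\<not> q dvd x"
  proof
    assume "q dvd x"
    then have "int q dvd int x" by simp
    moreover obtain j where "k = Suc j" using k by (cases k) auto
    ultimately have "int q dvd int x ^ k" by simp
    from dvd_diff[OF this qxk] have "int q dvd 1" by simp
    then show False using q by (simp add: prime_gt_1_nat)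
  qed
  have cong_iff: "[x ^ m = 1] (mod q) \<longleftrightarrow> int q dvd int x ^ m - 1" for m
  proof -
    have "[x ^ m = 1] (mod q) \<longleftrightarrow> [int (x ^ m) = int 1] (mod int q)" by (rule cong_int_iff[symmetric])
    also have "\<dots> \<longleftrightarrow> int q dvd int (x ^ m) - int 1" by (rule cong_iff_dvd_diff)
    finally show ?thesis by simp
  qed
  have claim: "\<not> [x ^ d = 1] (mod q)" if d: "0 < d" "d < k" "d dvd k" for d
  proof
    assume "[x ^ d = 1] (mod q)"
    then have "int q dvd (\<Prod>e\<in>{e. e dvd d}. u e)" using cong_iff prodx[OF d(1)] by simp
    moreover have "finite {e. e dvd d}" using d(1) by simp
    ultimately obtain e where e: "e dvd d" "int q dvd u e"
      using prime_dvd_prod_iff[OF _ qint] by blast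
    have e0: "e > 0" using e(1) d(1) by (auto intro: Nat.gr0I)
    have ek: "e dvd k" using e(1) d(3) by (rule dvd_trans)
    have enk: "e \<noteq> k" using dvd_imp_le[OF e(1) d(1)] d(2) by simp
    define A where "A = {d. d dvd k}"
    have fA: "finite A" unfolding A_def using k by simp
    define G where "G = (\<Prod>d\<in>A - {k} - {e}. cyc d)"
    define H where "H = cyc e * G"
    have split: "monom 1 k - 1 = cyc k * H"
    proof -
      have "monom 1 k - 1 = (\<Prod>d\<in>A. cyc d)" unfolding A_def by (rule Xk_poly[OF k])
      also have "\<dots> = cyc k * (\<Prod>d\<in>A - {k}. cyc d)" using fA by (rule prod.remove) (simp add: A_def)
      also have "(\<Prod>d\<in>A - {k}. cyc d) = cyc e * G" unfolding G_def
        using fA ek enk by (intro prod.remove) (auto simp: A_def)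
      finally show ?thesis unfolding H_def .
    qed
    have cG: "cin \<int> G" unfolding G_def
      by (rule cin_prod[OF subr_Ints], rule cyc_int) (use k in \<open>auto simp: A_def intro: Nat.gr0I\<close>)
    have cH: "cin \<int> H" unfolding H_def using cG cyc_int[OF e0] by (intro cin_mult subr_Ints)
    have "pderiv (monom 1 k - 1) = cyc k * pderiv H + H * pderiv (cyc k)"
      unfolding split by (rule pderiv_mult)
    then have "poly (pderiv (monom 1 k - 1)) cx = poly (cyc k) cx * poly (pderiv H) cx +
                 poly (cyc e) cx * poly G cx * poly (pderiv (cyc k)) cx"
      by (simp add: H_def)
    moreover have "poly (pderiv (monom 1 k - 1)) cx = of_nat k * cx ^ (k - 1)"
      by (simp add: pderiv_diff pderiv_monom poly_monom)
    moreover obtain h1 where h1: "poly (pderiv H) cx = of_int h1"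
      using intv[OF cin_pderiv[OF subr_Ints cH]] by (elim Ints_cases)
    moreover obtain g1 where g1: "poly G cx = of_int g1"
      using intv[OF cG] by (elim Ints_cases)
    moreover obtain c1 where c1: "poly (pderiv (cyc k)) cx = of_int c1"
      using intv[OF cin_pderiv[OF subr_Ints cyc_int[OF k]]] by (elim Ints_cases)
    ultimately have "(of_int (int k * int x ^ (k - 1)) :: complex) = of_int (u k * h1 + u e * g1 * c1)"
      using u[OF k] u[OF e0] unfolding cx_def by simp
    then have eq: "int k * int x ^ (k - 1) = u k * h1 + u e * g1 * c1" by (simp only: of_int_eq_iff)
    have "int q dvd u k * h1 + u e * g1 * c1" using qk e(2) by simp
    then have "int q dvd int k * int x ^ (k - 1)" using eq by simp
    then have "int q dvd int k \<or> int q dvd int x ^ (k - 1)" using qint by (simp add: prime_dvd_mult_iff)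
    then have "int q dvd int x"
    proof
      assume "int q dvd int k" then show ?thesis using kx(1) by (meson dvd_trans of_nat_dvd_iff)
    next
      assume "int q dvd int x ^ (k - 1)" then show ?thesis using qint prime_dvd_power by blast
    qed
    then show False using qnx by simp
  qed
  have cop: "coprime q x" using q qnx by (simp add: prime_imp_coprime)
  have xk: "[x ^ k = 1] (mod q)" using cong_iff qxk by simp
  have o1: "ord q x dvd k" using xk ord_divides by blast
  have o0: "ord q x > 0" using cop ord_eq_0 by blast
  have "ord q x = k"
  proof (rule ccontr)
    assume "ord q x \<noteq> k"
    then have "ord q x < k" using dvd_imp_le[OF o1 k] by simp
    then show False using claim[OF o0 _ o1] ord[of x q] by blast
  qed
  moreover have "[x ^ (q - 1) = 1] (mod q)" using fermat_theorem[OF q qnx] .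
  ultimately have "k dvd q - 1" using ord_divides by blast
  moreover have "\<not> q dvd D" using qnx kx(2) dvd_trans by blast
  ultimately show ?thesis using q by blast
qed



definition wt :: "(nat \<Rightarrow>\<^sub>0 nat) \<Rightarrow> complex" where
  "wt a = (\<Prod>i\<in>Poly_Mapping.keys a. of_nat (fact (Poly_Mapping.lookup a i)))"

definition rep :: "complex set \<Rightarrow> ((nat \<Rightarrow>\<^sub>0 nat) \<Rightarrow> bool) \<Rightarrow> cpoly \<Rightarrow> bool" where
  "rep R P h \<longleftrightarrow> (\<exists>xs. h = (\<Sum>(a,r)\<leftarrow>xs. Poly_Mapping.single a r) \<and> (\<forall>(a,r)\<in>set xs. P a \<and> r \<in> R))"

lemma rep_0: "rep R P 0"
  unfolding rep_def by (intro exI[of _ "[]"]) simp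

lemma rep_single: "P a \<Longrightarrow> r \<in> R \<Longrightarrow> rep R P (Poly_Mapping.single a r)"
  unfolding rep_def by (intro exI[of _ "[(a,r)]"]) simp

lemma rep_add: "rep R P g \<Longrightarrow> rep R P h \<Longrightarrow> rep R P (g + h)"
  unfolding rep_def
proof (elim exE conjE)
  fix xs ys assume "g = (\<Sum>(a,r)\<leftarrow>xs. Poly_Mapping.single a r)" "\<forall>(a,r)\<in>set xs. P a \<and> r \<in> R"
    "h = (\<Sum>(a,r)\<leftarrow>ys. Poly_Mapping.single a r)" "\<forall>(a,r)\<in>set ys. P a \<and> r \<in> R"
  then show "\<exists>zs. g + h = (\<Sum>(a,r)\<leftarrow>zs. Poly_Mapping.single a r) \<and> (\<forall>(a,r)\<in>set zs. P a \<and> r \<in> R)"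
    by (intro exI[of _ "xs @ ys"]) auto
qed

lemma rep_list: "(\<forall>(a,r)\<in>set xs. P a \<and> r \<in> R) \<Longrightarrow> rep R P (\<Sum>(a,r)\<leftarrow>xs. Poly_Mapping.single a r)"
  unfolding rep_def by blast

lemma rep_mult_single:
  assumes R: "subr R" and a: "P a" "r \<in> R" and h: "rep R Q h" and S: "\<And>b. Q b \<Longrightarrow> S (a + b)"
  shows "rep R S (Poly_Mapping.single a r * h)"
proof -
  obtain ys where ys: "h = (\<Sum>(b,s)\<leftarrow>ys. Poly_Mapping.single b s)" "\<forall>(b,s)\<in>set ys. Q b \<and> s \<in> R"
    using h unfolding rep_def by blast
  have "\<forall>(b,s)\<in>set ys. Q b \<and> s \<in> R \<Longrightarrow> rep R S (Poly_Mapping.single a r * (\<Sum>(b,s)\<leftarrow>ys. Poly_Mapping.single b s))"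
  proof (induction ys)
    case Nil then show ?case by (simp add: rep_0)
  next
    case (Cons y ys)
    obtain b s where y: "y = (b, s)" by (cases y)
    have "Poly_Mapping.single a r * (\<Sum>(b,s)\<leftarrow>y # ys. Poly_Mapping.single b s)
        = Poly_Mapping.single (a + b) (r * s) + Poly_Mapping.single a r * (\<Sum>(b,s)\<leftarrow>ys. Poly_Mapping.single b s)"
      by (simp add: y distrib_left mult_single)
    moreover have "rep R S (Poly_Mapping.single (a + b) (r * s))"
      using Cons.prems y a S R by (intro rep_single) (auto intro: subrD)
    ultimately show ?case using Cons by (simp add: rep_add)
  qed
  then show ?thesis using ys by simp
qed

lemma rep_mult:
  assumes R: "subr R" and g: "rep R P g" and h: "rep R Q h" and S: "\<And>a b. P a \<Longrightarrow> Q b \<Longrightarrow> S (a + b)"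
  shows "rep R S (g * h)"
proof -
  obtain xs where xs: "g = (\<Sum>(a,r)\<leftarrow>xs. Poly_Mapping.single a r)" "\<forall>(a,r)\<in>set xs. P a \<and> r \<in> R"
    using g unfolding rep_def by blast
  have "\<forall>(a,r)\<in>set xs. P a \<and> r \<in> R \<Longrightarrow> rep R S ((\<Sum>(a,r)\<leftarrow>xs. Poly_Mapping.single a r) * h)"
  proof (induction xs)
    case Nil then show ?case by (simp add: rep_0)
  next
    case (Cons x xs)
    obtain a r where x: "x = (a, r)" by (cases x)
    have "(\<Sum>(a,r)\<leftarrow>x # xs. Poly_Mapping.single a r) * h
        = Poly_Mapping.single a r * h + (\<Sum>(a,r)\<leftarrow>xs. Poly_Mapping.single a r) * h"
      by (simp add: x distrib_right)
    moreover have "rep R S (Poly_Mapping.single a r * h)"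
      using Cons.prems x by (intro rep_mult_single[OF R _ _ h]) (auto intro: S)
    ultimately show ?case using Cons by (simp add: rep_add)
  qed
  then show ?thesis using xs by simp
qed

lemma rep_sum: "finite J \<Longrightarrow> (\<And>j. j \<in> J \<Longrightarrow> P (M j) \<and> cs j \<in> R)
   \<Longrightarrow> rep R P (\<Sum>j\<in>J. Poly_Mapping.single (M j) (cs j))"
  by (induction J rule: finite_induct) (auto intro: rep_0 rep_add rep_single)

lemma Lfun_wt: "Lfun p = (\<Sum>a\<in>Poly_Mapping.keys p. Poly_Mapping.lookup p a * wt a)"
  unfolding Lfun_def wt_def ..

lemma Lfun_add: "Lfun (g + h) = Lfun g + Lfun h"
  unfolding Lfun_wt
  by (rule setsum_keys_plus_distrib[where f = "\<lambda>a v. v * wt a"]) (auto simp: algebra_simps)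

lemma Lfun_single: "Lfun (Poly_Mapping.single a r) = r * wt a"
  unfolding Lfun_wt by simp

lemma Lfun_0: "Lfun 0 = 0"
  unfolding Lfun_wt by simp

lemma Lfun_rep_div:
  assumes R: "subr R" and p: "prime p" and h: "rep R (\<lambda>a. Poly_Mapping.lookup a 1 \<ge> p) h"
  shows "\<exists>s\<in>R. Lfun h = of_nat p * s"
proof -
  obtain xs where xs: "h = (\<Sum>(a,r)\<leftarrow>xs. Poly_Mapping.single a r)"
      "\<forall>(a,r)\<in>set xs. Poly_Mapping.lookup a 1 \<ge> p \<and> r \<in> R"
    using h unfolding rep_def by blast
  have "\<forall>(a,r)\<in>set xs. Poly_Mapping.lookup a 1 \<ge> p \<and> r \<in> R \<Longrightarrow>
      \<exists>s\<in>R. Lfun (\<Sum>(a,r)\<leftarrow>xs. Poly_Mapping.single a r) = of_nat p * s"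
  proof (induction xs)
    case Nil then show ?case using subrD(1)[OF R] by (auto simp: Lfun_0)
  next
    case (Cons x xs)
    obtain a r where x: "x = (a, r)" by (cases x)
    have a1: "Poly_Mapping.lookup a 1 \<ge> p" "r \<in> R" using Cons.prems x by auto
    have p1: "p \<ge> 1" using prime_gt_1_nat[OF p] by simp
    have k1: "1 \<in> Poly_Mapping.keys a" using a1 p1 by (simp add: in_keys_iff)
    have "p dvd fact (Poly_Mapping.lookup a 1)" using a1(1) p1 by (intro dvd_fact) auto
    also have "fact (Poly_Mapping.lookup a 1) dvd (\<Prod>i\<in>Poly_Mapping.keys a. fact (Poly_Mapping.lookup a i) :: nat)"
      using k1 by (intro dvd_prodI) auto
    finally obtain z where z: "(\<Prod>i\<in>Poly_Mapping.keys a. fact (Poly_Mapping.lookup a i) :: nat) = p * z"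
      by (elim dvdE)
    have wa: "wt a = of_nat p * of_nat z"
    proof -
      have "(of_nat (\<Prod>i\<in>Poly_Mapping.keys a. fact (Poly_Mapping.lookup a i) :: nat) :: complex) = of_nat (p * z)"
        using z by simp
      then show ?thesis unfolding wt_def of_nat_prod of_nat_mult .
    qed
    obtain s where s: "s \<in> R" "Lfun (\<Sum>(a,r)\<leftarrow>xs. Poly_Mapping.single a r) = of_nat p * s"
      using Cons by auto
    have "Lfun (\<Sum>(a,r)\<leftarrow>x # xs. Poly_Mapping.single a r) = of_nat p * (r * of_nat z + s)"
      using s(2) by (simp add: x Lfun_add Lfun_single wa algebra_simps)
    moreover have "r * of_nat z + s \<in> R" using a1(2) s(1) R by (intro subrD subr_of_nat) auto
    ultimately show ?case by blast
  qed
  then show ?thesis using xs by simp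
qed



lemma power_expand:
  fixes K :: "nat \<Rightarrow>\<^sub>0 nat" and g :: cpoly and c :: complex
  assumes R: "subr R" and cR: "c \<in> R"
    and g: "rep R (\<lambda>a. Poly_Mapping.lookup a 1 \<ge> Poly_Mapping.lookup K 1 + 1) g"
  shows "\<exists>E G. (\<forall>i. Poly_Mapping.lookup E i = m * Poly_Mapping.lookup K i) \<and>
     (Poly_Mapping.single K c + g) ^ m = Poly_Mapping.single E (c ^ m) + G \<and>
     rep R (\<lambda>a. Poly_Mapping.lookup a 1 \<ge> m * Poly_Mapping.lookup K 1 + 1) G"
proof (induction m)
  case 0
  show ?case by (intro exI[of _ 0] exI[of _ 0]) (simp add: rep_0)
next
  case (Suc m)
  let ?k = "Poly_Mapping.lookup K 1"
  obtain E G where EG: "\<forall>i. Poly_Mapping.lookup E i = m * Poly_Mapping.lookup K i"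
    "(Poly_Mapping.single K c + g) ^ m = Poly_Mapping.single E (c ^ m) + G"
    "rep R (\<lambda>a. Poly_Mapping.lookup a 1 \<ge> m * ?k + 1) G"
    using Suc.IH by blast
  let ?P = "\<lambda>a. Poly_Mapping.lookup a 1 \<ge> Suc m * ?k + 1"
  define G' where "G' = Poly_Mapping.single K c * G + g * Poly_Mapping.single E (c ^ m) + g * G"
  have E1: "Poly_Mapping.lookup E 1 = m * ?k" using EG(1) by simp
  have "(Poly_Mapping.single K c + g) ^ Suc m
      = (Poly_Mapping.single K c + g) * (Poly_Mapping.single E (c ^ m) + G)"
    using EG(2) by simp
  also have "\<dots> = Poly_Mapping.single (K + E) (c ^ Suc m) + G'"
    unfolding G'_def by (simp add: algebra_simps mult_single)
  finally have eq: "(Poly_Mapping.single K c + g) ^ Suc m = Poly_Mapping.single (K + E) (c ^ Suc m) + G'" .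
  have r1: "rep R ?P (Poly_Mapping.single K c * G)"
    by (rule rep_mult[OF R rep_single[of "\<lambda>a. a = K", OF refl cR] EG(3)]) (auto simp: lookup_add)
  have r2: "rep R ?P (g * Poly_Mapping.single E (c ^ m))"
    by (rule rep_mult[OF R g rep_single[of "\<lambda>a. a = E", OF refl subr_power[OF R cR]]])
       (auto simp: lookup_add EG(1))
  have r3: "rep R ?P (g * G)"
    by (rule rep_mult[OF R g EG(3)]) (auto simp: lookup_add)
  have "rep R ?P G'" unfolding G'_def using r1 r2 r3 by (intro rep_add)
  moreover have "\<forall>i. Poly_Mapping.lookup (K + E) i = Suc m * Poly_Mapping.lookup K i"
    using EG(1) by (simp add: lookup_add)
  ultimately show ?case using eq by blast
qed

theorem proposition4p10:
  fixes n d :: nat and K :: "nat \<Rightarrow>\<^sub>0 nat" and M :: "nat \<Rightarrow> (nat \<Rightarrow>\<^sub>0 nat)"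
    and c :: complex and cs :: "nat \<Rightarrow> complex"
  assumes "n \<ge> 1"
    and "Poly_Mapping.keys K \<subseteq> {1..n}"
    and "Poly_Mapping.lookup K 1 \<ge> 1"
    and "\<forall>i\<in>{2..n}. Poly_Mapping.lookup K i \<le> Poly_Mapping.lookup K 1"
    and "c \<noteq> 0"
    and "\<forall>j\<in>{1..d}. Poly_Mapping.keys (M j) \<subseteq> {1..n}"
    and "\<forall>j\<in>{1..d}. Poly_Mapping.lookup (M j) 1 \<ge> Poly_Mapping.lookup K 1 + 1"
  shows "\<exists>m\<ge>1. Lfun ((Poly_Mapping.single K c + (\<Sum>j=1..d. Poly_Mapping.single (M j) (cs j))) ^ m) \<noteq> 0"
proof (rule ccontr)
  assume contra: "\<not> ?thesis"
  let ?k = "Poly_Mapping.lookup K 1"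
  let ?g = "\<Sum>j=1..d. Poly_Mapping.single (M j) (cs j)"
  define S where "S = insert c (cs ` {1..d})"
  define R where "R = Rg S"
  have R: "subr R" unfolding R_def by (rule subr_Rg)
  have cR: "c \<in> R" unfolding R_def S_def by (simp add: Rg.gen)
  have fS: "finite S" unfolding S_def by simp
  have Kle: "Poly_Mapping.lookup K i \<le> ?k" for i
  proof (cases "i \<in> Poly_Mapping.keys K")
    case True
    then have "i \<in> {1..n}" using assms(2) by auto
    then show ?thesis using assms(4) by (cases "i = 1") auto
  next
    case False then show ?thesis by (simp add: in_keys_iff)
  qed
  have g: "rep R (\<lambda>a. Poly_Mapping.lookup a 1 \<ge> ?k + 1) ?g"
    using assms(7) by (intro rep_sum) (auto simp: R_def S_def intro: Rg.gen)
  obtain D where D: "D > 0" "\<And>p. prime p \<Longrightarrow> 1 / of_nat p \<in> Rg (insert (1/c) S) \<Longrightarrow> p dvd D"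
    using inv_primes_finite[OF fS] cR assms(5) unfolding R_def by blast
  obtain q where q: "prime q" "?k dvd q - 1" "\<not> q dvd D"
    using primes_1_mod[OF _ D(1), of ?k] assms(3) by auto
  define m where "m = (q - 1) div ?k"
  have q1: "q \<ge> 2" using q(1) by (simp add: prime_ge_2_nat)
  have qm: "q = m * ?k + 1" unfolding m_def using q(2) q1 by simp
  have m1: "m \<ge> 1"
  proof (rule ccontr)
    assume "\<not> m \<ge> 1" then have "m = 0" by simp
    then show False using qm q1 by simp
  qed
  obtain E G where EG: "\<forall>i. Poly_Mapping.lookup E i = m * Poly_Mapping.lookup K i"
     "(Poly_Mapping.single K c + ?g) ^ m = Poly_Mapping.single E (c ^ m) + G"
     "rep R (\<lambda>a. Poly_Mapping.lookup a 1 \<ge> m * ?k + 1) G"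
    using power_expand[OF R cR g] by blast
  have "rep R (\<lambda>a. Poly_Mapping.lookup a 1 \<ge> q) G" using EG(3) qm by simp
  from Lfun_rep_div[OF R q(1) this] obtain s where s: "s \<in> R" "Lfun G = of_nat q * s" by blast
  define N where "N = (\<Prod>i\<in>Poly_Mapping.keys E. fact (Poly_Mapping.lookup E i) :: nat)"
  have wE: "wt E = of_nat N" unfolding wt_def N_def by (simp add: of_nat_prod)
  have qN: "\<not> q dvd N"
  proof
    assume "q dvd N"
    then obtain i where i: "i \<in> Poly_Mapping.keys E" "q dvd fact (Poly_Mapping.lookup E i)"
      using \<open>q dvd N\<close> unfolding N_def prime_dvd_prod_iff[OF finite_keys q(1)] by blast
    then have "q \<le> Poly_Mapping.lookup E i" using prime_dvd_fact_iff[OF q(1)] by blast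
    moreover have "Poly_Mapping.lookup E i \<le> m * ?k" using EG(1) Kle by (simp add: mult_le_mono2)
    ultimately show False using qm by simp
  qed
  have "Lfun ((Poly_Mapping.single K c + ?g) ^ m) = 0" using contra m1 by blast
  then have "c ^ m * of_nat N + of_nat q * s = 0"
    using EG(2) s(2) by (simp add: Lfun_add Lfun_single wE)
  moreover have "coprime (int N) (int q)" using qN q(1)
    by (metis coprime_commute coprime_int_iff prime_imp_coprime)
  then obtain u v where uv: "u * int N + v * int q = 1" using bezout_int[of "int N" "int q"] by auto
  ultimately have cm: "c ^ m = of_nat q * (of_int v * c ^ m - of_int u * s)"
  proof -
    assume eq0: "c ^ m * of_nat N + of_nat q * s = 0"
    have "c ^ m = c ^ m * (of_int u * of_nat N + of_int v * of_nat q)"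
      using arg_cong[OF uv, of "of_int :: int \<Rightarrow> complex"] by simp
    also have "\<dots> = of_int u * (c ^ m * of_nat N) + of_nat q * (of_int v * c ^ m)" by (simp add: algebra_simps)
    also have "c ^ m * of_nat N = - (of_nat q * s)" using eq0 by (simp add: eq_neg_iff_add_eq_0)
    finally show ?thesis by (simp add: algebra_simps)
  qed
  have bR: "of_int v * c ^ m - of_int u * s \<in> R"
    using R cR s(1) by (intro subrD subr_of_int subr_power) auto
  have qnz: "q \<noteq> 0" using q1 by simp
  have "1 / of_nat q = (of_int v * c ^ m - of_int u * s) / c ^ m"
    using cm assms(5) qnz by (simp add: field_simps)
  moreover have "(of_int v * c ^ m - of_int u * s) / c ^ m \<in> Rg (insert (1/c) S)"
    using bR unfolding R_def by (rule inv_Rg)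
  ultimately have "q dvd D" using D(2)[OF q(1)] by simp
  then show False using q(3) by simp
qed


end
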